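(* Let $T_1$ be a quadtree in $\mathbb{R}^d$ with $n$ cells, where the dimension $d$ is a constant. Then its extended quadtree $T^*$ has $\mathcal{O}(n)$ cells.
   Context: A quadtree on an axis-aligned root hypercube $R\subset\mathbb{R}^d$ is a hierarchical decomposition in which every node has an associated axis-aligned hypercube (cell) and is either a leaf or has $2^d$ equal-sized children whose cells subdivide its cell. The size $|C|$ of a cell is its edge length. Two cells are neighbors if they are interior-disjoint and share (part of) a $(d-1)$-dimensional facet. For an integer $j$, a cell $C$ is $2^j$-smooth if every leaf neighboring $C$ has size at most $2^j|C|$. Extended quadtree: the cells of $T_1$ get brand $1$. Recursively, for $j\ge1$, let $T^j$ be the quadtree formed by $\bigcup_{i\le j}T_i$, and let $T_{j+1}$ be the minimal set of cells obtained by splitting cells of $T^j$ such that every cell of $T_j$ is $2^j$-smooth in the resulting quadtree; the cells of $T_{j+1}$ get brand $j+1$. The extended quadtree is $T^*=T^{d+1}$. *)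

theory Defs
  imports Main
begin

text \<open>Cells are encoded combinatorially relative to the root hypercube R:
  a cell (k, a) with a = [a_0,...,a_{d-1}] is the cube
  prod_i [lo_i + a_i s/2^k, lo_i + (a_i+1) s/2^k] where R = prod_i [lo_i, lo_i + s].
  Its size is s / 2^k.  All notions below (neighbourhood, smoothness) are invariant
  under translation and scaling, so this encoding is faithful for any root R.\<close>

type_synonym cell = "nat \<times> nat list"

definition valid_cell :: "nat \<Rightarrow> cell \<Rightarrow> bool" where
  "valid_cell d c \<longleftrightarrow> length (snd c) = d \<and> (\<forall>x\<in>set (snd c). x < 2 ^ fst c)"

definition root_cell :: "nat \<Rightarrow> cell" where
  "root_cell d = (0, replicate d 0)"

definition parent :: "cell \<Rightarrow> cell" where
  "parent c = (fst c - 1, map (\<lambda>x. x div 2) (snd c))"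

definition children :: "nat \<Rightarrow> cell \<Rightarrow> cell set" where
  "children d c = {(Suc (fst c), b) | b. length b = d \<and> (\<forall>i<d. b ! i div 2 = snd c ! i)}"

definition quadtree :: "nat \<Rightarrow> cell set \<Rightarrow> bool" where
  "quadtree d T \<longleftrightarrow> finite T \<and> root_cell d \<in> T \<and> (\<forall>c\<in>T. valid_cell d c)
     \<and> (\<forall>c\<in>T. 0 < fst c \<longrightarrow> parent c \<in> T)
     \<and> (\<forall>c\<in>T. children d c \<subseteq> T \<or> children d c \<inter> T = {})"

definition leaf :: "nat \<Rightarrow> cell set \<Rightarrow> cell \<Rightarrow> bool" where
  "leaf d T c \<longleftrightarrow> c \<in> T \<and> children d c \<inter> T = {}"

text \<open>Coordinates of the cell boundaries in units of 1/2^m of the root size (m \<ge> level).\<close>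
definition lo :: "nat \<Rightarrow> cell \<Rightarrow> nat \<Rightarrow> nat" where
  "lo m c i = snd c ! i * 2 ^ (m - fst c)"

definition hi :: "nat \<Rightarrow> cell \<Rightarrow> nat \<Rightarrow> nat" where
  "hi m c i = (snd c ! i + 1) * 2 ^ (m - fst c)"

text \<open>Two cells are neighbours iff they are interior-disjoint and share a
  (d-1)-dimensional part of a facet: they touch in exactly one coordinate direction j
  (one's upper face equals the other's lower face) and their projections overlap
  with positive length in every other coordinate.\<close>
definition neighbors :: "nat \<Rightarrow> cell \<Rightarrow> cell \<Rightarrow> bool" where
  "neighbors d c c' \<longleftrightarrow> (let m = max (fst c) (fst c') in
     \<exists>j<d. (hi m c j = lo m c' j \<or> hi m c' j = lo m c j) \<and>
       (\<forall>i<d. i \<noteq> j \<longrightarrow> max (lo m c i) (lo m c' i) < min (hi m c i) (hi m c' i)))"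

text \<open>C is 2^j-smooth in Q: every leaf L of Q neighbouring C has |L| \<le> 2^j |C|,
  i.e. 2^(-level L) \<le> 2^j 2^(-level C).\<close>
definition smooth :: "nat \<Rightarrow> cell set \<Rightarrow> nat \<Rightarrow> cell \<Rightarrow> bool" where
  "smooth d Q j c \<longleftrightarrow> (\<forall>L. leaf d Q L \<and> neighbors d c L \<longrightarrow> int (fst c) - int (fst L) \<le> int j)"

text \<open>Cells of brand j, given the cumulative trees S j = T^j.\<close>
definition brand :: "(nat \<Rightarrow> cell set) \<Rightarrow> nat \<Rightarrow> cell set" where
  "brand S j = (if j \<le> 1 then S 1 else S j - S (j - 1))"

definition step_ok :: "nat \<Rightarrow> (nat \<Rightarrow> cell set) \<Rightarrow> nat \<Rightarrow> cell set \<Rightarrow> bool" where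
  "step_ok d S j Q \<longleftrightarrow> quadtree d Q \<and> S j \<subseteq> Q \<and> (\<forall>c\<in>brand S j. smooth d Q j c)"

text \<open>S is (a choice of) the sequence T^1 \<subseteq> T^2 \<subseteq> ... of the extended quadtree
  construction for T_1 = T; T^* = S (d+1).  T_{j+1} = S(j+1) - S j is required to be
  minimal, i.e. S (j+1) is inclusion-minimal among admissible refinements.\<close>
definition extended_seq :: "nat \<Rightarrow> cell set \<Rightarrow> (nat \<Rightarrow> cell set) \<Rightarrow> bool" where
  "extended_seq d T S \<longleftrightarrow> S 1 = T \<and>
     (\<forall>j. 1 \<le> j \<and> j \<le> d \<longrightarrow>
        step_ok d S j (S (Suc j)) \<and>
        (\<forall>Q. step_ok d S j Q \<and> Q \<subseteq> S (Suc j) \<longrightarrow> Q = S (Suc j)))"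

end

theory Submission
  imports Defs
begin

lemma count_lists:
  fixes l :: "nat \<Rightarrow> nat" and n w :: nat
  defines "F \<equiv> {b. length b = n \<and> (\<forall>i<n. l i \<le> b!i \<and> b!i \<le> l i + w)}"
  shows "finite F \<and> card F \<le> (w+1)^n"
proof -
  define f where "f b = map (\<lambda>i. b!i - l i) [0..<n]" for b :: "nat list"
  define G where "G = {xs. set xs \<subseteq> {0..w} \<and> length xs = n}"
  have inj: "inj_on f F"
  proof (rule inj_onI)
    fix x y assume x: "x \<in> F" and y: "y \<in> F" and e: "f x = f y"
    show "x = y"
    proof (rule nth_equalityI)
      show "length x = length y" using x y by (simp add: F_def)
      fix i assume "i < length x"
      hence i: "i < n" using x by (simp add: F_def)
      have "f x ! i = f y ! i" using e by simp
      hence "x!i - l i = y!i - l i" using i by (simp add: f_def)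
      moreover have "l i \<le> x!i" "l i \<le> y!i" using x y i by (auto simp: F_def)
      ultimately show "x!i = y!i" by simp
    qed
  qed
  have sub: "f ` F \<subseteq> G"
  proof
    fix z assume "z \<in> f ` F"
    then obtain b where b: "b \<in> F" "z = f b" by auto
    have "\<forall>i<n. b!i - l i \<le> w" using b(1) by (auto simp: F_def)
    thus "z \<in> G" using b by (auto simp: G_def f_def)
  qed
  have fG: "finite G" unfolding G_def by (simp add: finite_lists_length_eq)
  have cG: "card G = (w+1)^n" unfolding G_def by (simp add: card_lists_length_eq)
  have "finite (f ` F)" using fG sub finite_subset by blast
  hence fF: "finite F" using inj finite_imageD by blast
  have "card F = card (f ` F)" using inj by (simp add: card_image)
  also have "\<dots> \<le> card G" using sub fG card_mono by blast
  finally show ?thesis using fF cG by simp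
qed

definition nb :: "nat \<Rightarrow> cell \<Rightarrow> cell set" where
  "nb d A = {(fst A, b) | b. length b = d \<and> (\<forall>i<d. b!i \<le> snd A!i + 1 \<and> snd A!i \<le> b!i + 1)}"

definition MM :: "nat \<Rightarrow> cell set \<Rightarrow> cell set" where
  "MM d P = (\<Union>A\<in>P. nb d A)"

definition XX :: "nat \<Rightarrow> cell set \<Rightarrow> cell set" where
  "XX d P = P \<union> (\<Union>D\<in>MM d P. children d D)"

lemma nb_card: "finite (nb d A) \<and> card (nb d A) \<le> 3^d"
proof -
  define F where "F = {b. length b = d \<and> (\<forall>i<d. snd A!i - 1 \<le> b!i \<and> b!i \<le> (snd A!i - 1) + 2)}"
  have FF: "finite F \<and> card F \<le> (2+1)^d" unfolding F_def by (rule count_lists)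
  have "nb d A \<subseteq> (\<lambda>b. (fst A, b)) ` F"
  proof (rule subsetI)
    fix x assume "x \<in> nb d A"
    then obtain b where b: "x = (fst A,b)" "length b = d" "\<forall>i<d. b!i \<le> snd A!i + 1 \<and> snd A!i \<le> b!i + 1"
      by (auto simp: nb_def)
    have "\<forall>i<d. snd A!i - 1 \<le> b!i \<and> b!i \<le> (snd A!i - 1) + 2"
    proof (intro allI impI)
      fix i assume "i < d"
      thus "snd A!i - 1 \<le> b!i \<and> b!i \<le> (snd A!i - 1) + 2" using b(3) by fastforce
    qed
    hence "b \<in> F" using b(2) by (simp add: F_def)
    thus "x \<in> (\<lambda>b. (fst A, b)) ` F" using b(1) by blast
  qed
  moreover have "finite ((\<lambda>b. (fst A, b)) ` F)" using FF by simp
  moreover have "card ((\<lambda>b. (fst A, b)) ` F) \<le> 3^d"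
    using FF card_image_le[of F "\<lambda>b. (fst A, b)"] by simp
  ultimately show ?thesis by (meson card_mono finite_subset le_trans)
qed

lemma children_card: "finite (children d D) \<and> card (children d D) \<le> 2^d"
proof -
  define F where "F = {b. length b = d \<and> (\<forall>i<d. 2 * snd D!i \<le> b!i \<and> b!i \<le> 2 * snd D!i + 1)}"
  have FF: "finite F \<and> card F \<le> (1+1)^d" unfolding F_def by (rule count_lists)
  have "children d D \<subseteq> (\<lambda>b. (Suc (fst D), b)) ` F"
  proof (rule subsetI)
    fix x assume "x \<in> children d D"
    then obtain b where b: "x = (Suc (fst D),b)" "length b = d" "\<forall>i<d. b!i div 2 = snd D!i"
      by (auto simp: children_def)
    have "\<forall>i<d. 2 * snd D!i \<le> b!i \<and> b!i \<le> 2 * snd D!i + 1"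
    proof (intro allI impI)
      fix i assume "i < d"
      hence "b!i div 2 = snd D!i" using b(3) by blast
      thus "2 * snd D!i \<le> b!i \<and> b!i \<le> 2 * snd D!i + 1" by linarith
    qed
    hence "b \<in> F" using b(2) by (simp add: F_def)
    thus "x \<in> (\<lambda>b. (Suc (fst D), b)) ` F" using b(1) by blast
  qed
  moreover have "finite ((\<lambda>b. (Suc (fst D), b)) ` F)" using FF by simp
  moreover have c2: "card F \<le> 2^d" using FF by (metis one_add_one)
  moreover have "card ((\<lambda>b. (Suc (fst D), b)) ` F) \<le> 2^d"
    using c2 FF card_image_le[of F "\<lambda>b. (Suc (fst D), b)"] le_trans by blast
  ultimately show ?thesis by (meson card_mono finite_subset le_trans)
qed

lemma MM_card: assumes "finite P" shows "finite (MM d P) \<and> card (MM d P) \<le> card P * 3^d"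
proof -
  have "card (MM d P) \<le> (\<Sum>A\<in>P. card (nb d A))" unfolding MM_def using assms card_UN_le by blast
  also have "\<dots> \<le> card P * 3^d" using nb_card sum_bounded_above[of P "\<lambda>A. card (nb d A)" "3^d"] by simp
  finally show ?thesis using assms nb_card unfolding MM_def by simp
qed

lemma XX_card: assumes "finite P" shows "card (XX d P) \<le> (1 + 3^d * 2^d) * card P"
proof -
  have fM: "finite (MM d P)" and cM: "card (MM d P) \<le> card P * 3^d" using MM_card[OF assms] by auto
  have "card (\<Union>D\<in>MM d P. children d D) \<le> (\<Sum>D\<in>MM d P. card (children d D))" using fM card_UN_le by blast
  also have "\<dots> \<le> card (MM d P) * 2^d" using children_card sum_bounded_above[of "MM d P" "\<lambda>D. card (children d D)" "2^d"] by simp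
  also have "\<dots> \<le> card P * 3^d * 2^d" using cM by simp
  finally have "card (\<Union>D\<in>MM d P. children d D) \<le> card P * 3^d * 2^d" .
  moreover have "card (XX d P) \<le> card P + card (\<Union>D\<in>MM d P. children d D)"
    unfolding XX_def by (rule card_Un_le)
  ultimately show ?thesis by (simp add: algebra_simps)
qed

lemma div_arith:
  fixes b x q :: nat
  assumes "b*q \<le> x+1" "x \<le> (b+1)*q" "q > 0"
  shows "b \<le> x div q + 1 \<and> x div q \<le> b + 1"
proof
  have "x div q \<le> (b+1)*q div q" using assms(2) div_le_mono by blast
  thus "x div q \<le> b + 1" using assms(3) by simp
next
  show "b \<le> x div q + 1"
  proof (rule ccontr)
    assume "\<not> ?thesis"
    hence "x div q + 2 \<le> b" by simp
    hence "(x div q + 2) * q \<le> b * q" by (rule mult_le_mono1)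
    moreover have "x < (x div q + 1) * q"
      using assms(3) by (metis add.commute div_mult_mod_eq mod_less_divisor mult.commute mult_Suc_right nat_add_left_cancel_less plus_1_eq_Suc)
    ultimately show False using assms(1,3) by (simp add: algebra_simps)
  qed
qed

lemma geo:
  assumes "neighbors d c L" "fst L \<le> fst c" "i < d"
  shows "snd L ! i \<le> snd c ! i div 2^(fst c - fst L) + 1 \<and> snd c ! i div 2^(fst c - fst L) \<le> snd L ! i + 1"
proof -
  define s where "s = fst c - fst L"
  have m: "max (fst c) (fst L) = fst c" using assms(2) by simp
  obtain j where j: "j < d" "hi (fst c) c j = lo (fst c) L j \<or> hi (fst c) L j = lo (fst c) c j"
    "\<forall>i<d. i \<noteq> j \<longrightarrow> max (lo (fst c) c i) (lo (fst c) L i) < min (hi (fst c) c i) (hi (fst c) L i)"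
    using assms(1) unfolding neighbors_def Let_def m by blast
  have lc: "lo (fst c) c i = snd c ! i" "hi (fst c) c i = snd c ! i + 1" by (simp_all add: lo_def hi_def)
  have lL: "lo (fst c) L i = snd L ! i * 2^s" "hi (fst c) L i = (snd L ! i + 1) * 2^s" by (simp_all add: lo_def hi_def s_def)
  have "snd L ! i * 2^s \<le> snd c ! i + 1 \<and> snd c ! i \<le> (snd L ! i + 1) * 2^s"
  proof (cases "i = j")
    case True
    then show ?thesis using j(2) lc lL by auto
  next
    case False
    then show ?thesis using j(3) assms(3) lc lL by fastforce
  qed
  thus ?thesis using div_arith[of "snd L ! i" "2^s" "snd c ! i"] by (simp add: s_def)
qed


lemma anc:
  assumes q: "quadtree d P" and c: "c \<in> P" and k: "k \<le> fst c"
  shows "(fst c - k, map (\<lambda>x. x div 2^k) (snd c)) \<in> P"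
  using k
proof (induction k)
  case 0
  then show ?case using c by simp
next
  case (Suc k)
  define A where "A = (fst c - k, map (\<lambda>x. x div 2^k) (snd c))"
  have A: "A \<in> P" using Suc by (simp add: A_def)
  have "0 < fst A" using Suc.prems by (simp add: A_def)
  hence "parent A \<in> P" using q A unfolding quadtree_def by blast
  moreover have "parent A = (fst c - Suc k, map (\<lambda>x. x div 2^Suc k) (snd c))"
  proof -
    have e: "\<And>x::nat. x div 2^k div 2 = x div 2^(Suc k)" by (metis div_mult2_eq power_Suc2)
    show ?thesis by (simp add: A_def parent_def e)
  qed
  ultimately show ?case by simp
qed

lemma parent_child:
  assumes "E \<in> children d D" "length (snd D) = d"
  shows "parent E = D"
proof -
  obtain b where b: "E = (Suc (fst D), b)" "length b = d" "\<forall>i<d. b!i div 2 = snd D!i"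
    using assms(1) by (auto simp: children_def)
  have "map (\<lambda>x. x div 2) b = snd D"
    by (rule nth_equalityI) (use b assms(2) in auto)
  thus ?thesis using b(1) by (simp add: parent_def)
qed

lemma child_exists:
  assumes "length (snd L) = d"
  shows "(Suc (fst L), map (\<lambda>x. 2*x) (snd L)) \<in> children d L"
  using assms by (auto simp: children_def)

lemma nb_valid: "D \<in> nb d A \<Longrightarrow> length (snd D) = d \<and> fst D = fst A"
  by (auto simp: nb_def)

lemma nb_parent:
  assumes "D \<in> nb d A" "length (snd A) = d"
  shows "parent D \<in> nb d (parent A)"
proof -
  obtain b where b: "D = (fst A, b)" "length b = d" "\<forall>i<d. b!i \<le> snd A!i + 1 \<and> snd A!i \<le> b!i + 1"
    using assms(1) by (auto simp: nb_def)
  have "\<forall>i<d. b!i div 2 \<le> snd A!i div 2 + 1 \<and> snd A!i div 2 \<le> b!i div 2 + 1"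
    using b(3) by fastforce
  thus ?thesis using b assms(2) by (auto simp: nb_def parent_def)
qed

lemma step_bound:
  assumes qP: "quadtree d P" and qQ: "quadtree d Q" and PQ: "P \<subseteq> Q" and BP: "B \<subseteq> P"
    and sm: "\<forall>c\<in>B. smooth d Q j c"
    and mini: "\<forall>Q'. (quadtree d Q' \<and> P \<subseteq> Q' \<and> (\<forall>c\<in>B. smooth d Q' j c)) \<and> Q' \<subseteq> Q \<longrightarrow> Q' = Q"
  shows "Q \<subseteq> XX d P"
proof -
  define Q0 where "Q0 = Q \<inter> XX d P"
  have validQ: "\<And>c. c \<in> Q \<Longrightarrow> valid_cell d c" using qQ by (simp add: quadtree_def)
  have PX: "P \<subseteq> XX d P" by (simp add: XX_def)
  have PQ0: "P \<subseteq> Q0" using PQ PX by (auto simp: Q0_def)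
  have PM: "P \<subseteq> MM d P"
  proof
    fix A assume A: "A \<in> P"
    have "length (snd A) = d" using qP A by (simp add: quadtree_def valid_cell_def)
    hence "A \<in> nb d A" by (cases A) (auto simp: nb_def)
    thus "A \<in> MM d P" using A by (auto simp: MM_def)
  qed
  have MMchild: "\<And>D. D \<in> MM d P \<Longrightarrow> children d D \<subseteq> XX d P" by (auto simp: XX_def)
  have q0: "quadtree d Q0"
    unfolding quadtree_def
  proof (intro conjI ballI impI)
    show "finite Q0" using qQ by (simp add: Q0_def quadtree_def)
    show "root_cell d \<in> Q0" using qP PQ0 by (auto simp: quadtree_def)
    fix c assume c: "c \<in> Q0"
    show "valid_cell d c" using c validQ by (simp add: Q0_def)
  next
    fix E assume E: "E \<in> Q0" and pos: "0 < fst E"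
    have pQ: "parent E \<in> Q" using qQ E pos by (simp add: Q0_def quadtree_def)
    have "parent E \<in> XX d P"
    proof (cases "E \<in> P")
      case True
      then show ?thesis using qP pos PX by (auto simp: quadtree_def)
    next
      case False
      then obtain D where D: "D \<in> MM d P" "E \<in> children d D" using E by (auto simp: Q0_def XX_def)
      obtain A where A: "A \<in> P" "D \<in> nb d A" using D(1) by (auto simp: MM_def)
      have lD: "length (snd D) = d" and fD: "fst D = fst A" using nb_valid[OF A(2)] by auto
      have pE: "parent E = D" using parent_child[OF D(2) lD] .
      have lA: "length (snd A) = d" using qP A(1) by (simp add: quadtree_def valid_cell_def)
      show ?thesis
      proof (cases "fst A = 0")
        case True
        have vD: "valid_cell d D" using pQ pE validQ by simp
        have "\<forall>x\<in>set (snd D). x = 0" using vD True fD by (simp add: valid_cell_def)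
        hence "snd D = replicate d 0" using lD by (metis replicate_length_same)
        hence "D = root_cell d" using True fD by (cases D) (simp add: root_cell_def)
        then show ?thesis using qP PX pE by (auto simp: quadtree_def)
      next
        case False
        have pA: "parent A \<in> P" using qP A(1) False by (simp add: quadtree_def)
        have "parent D \<in> nb d (parent A)" using nb_parent[OF A(2) lA] .
        hence "parent D \<in> MM d P" using pA by (auto simp: MM_def)
        moreover have "D \<in> children d (parent D)"
        proof -
          obtain b where b: "D = (fst A, b)" "length b = d" using A(2) by (auto simp: nb_def)
          show ?thesis using b False by (auto simp: children_def parent_def)
        qed
        ultimately show ?thesis using pE by (auto simp: XX_def)
      qed
    qed
    thus "parent E \<in> Q0" using pQ by (simp add: Q0_def)
  next
    fix C assume C: "C \<in> Q0"
    show "children d C \<subseteq> Q0 \<or> children d C \<inter> Q0 = {}"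
    proof (cases "children d C \<inter> Q = {}")
      case True
      then show ?thesis by (auto simp: Q0_def)
    next
      case False
      hence cQ: "children d C \<subseteq> Q" using qQ C by (auto simp: Q0_def quadtree_def)
      show ?thesis
      proof (cases "C \<in> MM d P")
        case True
        then show ?thesis using cQ MMchild by (auto simp: Q0_def)
      next
        case False
        have lC: "length (snd C) = d" using C validQ by (simp add: Q0_def valid_cell_def)
        have "children d C \<inter> XX d P = {}"
        proof (rule ccontr)
          assume "children d C \<inter> XX d P \<noteq> {}"
          then obtain E where E: "E \<in> children d C" "E \<in> XX d P" by blast
          have pE: "parent E = C" using parent_child[OF E(1) lC] .
          have fE: "0 < fst E" using E(1) by (auto simp: children_def)
          show False
          proof (cases "E \<in> P")
            case True
            hence "parent E \<in> P" using qP fE by (simp add: quadtree_def)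
            then show False using pE False PM by auto
          next
            case nP: False
            then obtain D where D: "D \<in> MM d P" "E \<in> children d D" using E(2) by (auto simp: XX_def)
            obtain A where A: "D \<in> nb d A" using D(1) by (auto simp: MM_def)
            have "parent E = D" using parent_child[OF D(2)] nb_valid[OF A] by blast
            then show False using pE D(1) False by simp
          qed
        qed
        then show ?thesis by (auto simp: Q0_def)
      qed
    qed
  qed
  have sm0: "\<forall>c\<in>B. smooth d Q0 j c"
    unfolding smooth_def
  proof (intro ballI allI impI)
    fix c L assume c: "c \<in> B" and L: "leaf d Q0 L \<and> neighbors d c L"
    show "int (fst c) - int (fst L) \<le> int j"
    proof (rule ccontr)
      assume nle: "\<not> ?thesis"
      hence lt: "fst L + j < fst c" by simp
      have LQ: "L \<in> Q" using L by (simp add: leaf_def Q0_def)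
      have lL: "length (snd L) = d" using LQ validQ by (simp add: valid_cell_def)
      have "\<not> leaf d Q L"
      proof
        assume "leaf d Q L"
        hence "int (fst c) - int (fst L) \<le> int j" using sm c L unfolding smooth_def by blast
        thus False using nle by simp
      qed
      hence "children d L \<inter> Q \<noteq> {}" using LQ by (simp add: leaf_def)
      hence cLQ: "children d L \<subseteq> Q" using qQ LQ by (auto simp: quadtree_def)
      have cP: "c \<in> P" using c BP by blast
      define A where "A = (fst c - (fst c - fst L), map (\<lambda>x. x div 2^(fst c - fst L)) (snd c))"
      have AP: "A \<in> P" unfolding A_def by (rule anc[OF qP cP]) simp
      have lc: "length (snd c) = d" using cP qP by (simp add: quadtree_def valid_cell_def)
      have "L \<in> nb d A"
      proof -
        have fA: "fst A = fst L" using lt by (simp add: A_def)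
        have "\<forall>i<d. snd L ! i \<le> snd A ! i + 1 \<and> snd A ! i \<le> snd L ! i + 1"
          using geo[of d c L] L lt lc by (simp add: A_def)
        thus ?thesis using fA lL unfolding nb_def by (cases L) auto
      qed
      hence "L \<in> MM d P" using AP by (auto simp: MM_def)
      hence "children d L \<subseteq> Q0" using cLQ MMchild by (auto simp: Q0_def)
      moreover have "(Suc (fst L), map (\<lambda>x. 2*x) (snd L)) \<in> children d L" using child_exists[OF lL] .
      ultimately show False using L by (auto simp: leaf_def)
    qed
  qed
  have "Q0 = Q" using mini q0 PQ0 sm0 by (auto simp: Q0_def)
  thus ?thesis by (auto simp: Q0_def)
qed


lemma iter_bound:
  assumes qT: "quadtree d T" and ex: "extended_seq d T S" and k: "k \<le> d"
  shows "quadtree d (S (Suc k)) \<and> card (S (Suc k)) \<le> (1 + 3^d * 2^d)^k * card T"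
  using k
proof (induction k)
  case 0
  then show ?case using qT ex by (simp add: extended_seq_def)
next
  case (Suc k)
  have IH: "quadtree d (S (Suc k))" "card (S (Suc k)) \<le> (1 + 3^d * 2^d)^k * card T"
    using Suc by auto
  have so: "step_ok d S (Suc k) (S (Suc (Suc k)))"
    and mi: "\<forall>Q. step_ok d S (Suc k) Q \<and> Q \<subseteq> S (Suc (Suc k)) \<longrightarrow> Q = S (Suc (Suc k))"
    using ex Suc.prems by (auto simp: extended_seq_def)
  have BP: "brand S (Suc k) \<subseteq> S (Suc k)" by (auto simp: brand_def)
  have sub: "S (Suc (Suc k)) \<subseteq> XX d (S (Suc k))"
    apply (rule step_bound[OF IH(1) _ _ BP, of _ "Suc k"])
    using so mi by (auto simp: step_ok_def)
  have qQ: "quadtree d (S (Suc (Suc k)))" using so by (simp add: step_ok_def)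
  have fP: "finite (S (Suc k))" using IH(1) by (simp add: quadtree_def)
  have fX: "finite (XX d (S (Suc k)))"
  proof -
    have "finite (MM d (S (Suc k)))" using MM_card[OF fP] by simp
    thus ?thesis using fP children_card by (simp add: XX_def)
  qed
  have "card (S (Suc (Suc k))) \<le> card (XX d (S (Suc k)))" using sub fX card_mono by blast
  also have "\<dots> \<le> (1 + 3^d * 2^d) * card (S (Suc k))" using XX_card[OF fP] .
  also have "\<dots> \<le> (1 + 3^d * 2^d) * ((1 + 3^d * 2^d)^k * card T)" using IH(2) by (rule mult_le_mono2)
  finally have "card (S (Suc (Suc k))) \<le> (1 + 3^d * 2^d) * ((1 + 3^d * 2^d)^k * card T)" .
  hence "card (S (Suc (Suc k))) \<le> (1 + 3^d * 2^d)^Suc k * card T" by (simp only: power_Suc mult.assoc)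
  thus ?case using qQ by blast
qed

theorem corollary14:
  shows "\<forall>d::nat. 1 \<le> d \<longrightarrow> (\<exists>C::nat. \<forall>T S.
           quadtree d T \<and> extended_seq d T S \<longrightarrow> card (S (Suc d)) \<le> C * card T)"
proof (intro allI impI)
  fix d :: nat
  show "\<exists>C::nat. \<forall>T S. quadtree d T \<and> extended_seq d T S \<longrightarrow> card (S (Suc d)) \<le> C * card T"
    using iter_bound[of d _ _ d] by blast
qed

end
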